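(* Let $V$ be a real vector space of odd finite dimension and $G\le\mathrm{GL}(V)$ a finite group. Let $S\le V$ be an irreducible $\mathbb{R}G$-submodule such that $V$ is $S$-homogeneous (i.e. $V$ is a direct sum of $\mathbb{R}G$-modules isomorphic to $S$), and suppose that the pair $(G,S)$ has the $E1$-property. Then the pair $(G,V)$ has the $E1$-property.
   Context: For a finite group $G$, a finite-dimensional $\mathbb{R}G$-module $V$ with representation $\rho\colon G\to\mathrm{GL}(V)$, and $n\in\mathrm{GL}(V)$ of finite order normalizing $\rho(G)$, the triple $(G,V,n)$ has the $E1$-property if there is $g\in G$ such that $\rho(g)n$ has eigenvalue $1$. The pair $(G,V)$ has the $E1$-property if $(G,V,n')$ has the $E1$-property for every $n'\in\mathrm{GL}(V)$ of finite order normalizing $\rho(G)$. *)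

theory Defs
  imports "HOL-Analysis.Analysis"
begin

definition finite_linear_group :: "('v::euclidean_space \<Rightarrow> 'v) set \<Rightarrow> bool" where
  "finite_linear_group G \<longleftrightarrow> finite G \<and> id \<in> G \<and>
     (\<forall>g\<in>G. linear g \<and> bij g \<and> inv g \<in> G) \<and> (\<forall>g\<in>G. \<forall>h\<in>G. g \<circ> h \<in> G)"

definition G_submodule :: "('v::euclidean_space \<Rightarrow> 'v) set \<Rightarrow> 'v set \<Rightarrow> bool" where
  "G_submodule G W \<longleftrightarrow> subspace W \<and> (\<forall>g\<in>G. \<forall>x\<in>W. g x \<in> W)"

definition irreducible_submodule :: "('v::euclidean_space \<Rightarrow> 'v) set \<Rightarrow> 'v set \<Rightarrow> bool" where
  "irreducible_submodule G S \<longleftrightarrow> G_submodule G S \<and> S \<noteq> {0} \<and>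
     (\<forall>U. G_submodule G U \<and> U \<subseteq> S \<longrightarrow> U = {0} \<or> U = S)"

definition G_iso_submodules :: "('v::euclidean_space \<Rightarrow> 'v) set \<Rightarrow> 'v set \<Rightarrow> 'v set \<Rightarrow> bool" where
  "G_iso_submodules G S W \<longleftrightarrow> (\<exists>\<phi>. linear \<phi> \<and> bij_betw \<phi> S W \<and>
     (\<forall>g\<in>G. \<forall>x\<in>S. \<phi> (g x) = g (\<phi> x)))"

definition homogeneous :: "('v::euclidean_space \<Rightarrow> 'v) set \<Rightarrow> 'v set \<Rightarrow> bool" where
  "homogeneous G S \<longleftrightarrow> (\<exists>(k::nat) (W::nat \<Rightarrow> 'v set).
     (\<forall>i<k. G_submodule G (W i) \<and> G_iso_submodules G S (W i)) \<and>
     (\<forall>v. \<exists>!w. (\<forall>i<k. w i \<in> W i) \<and> (\<forall>i\<ge>k. w i = 0) \<and> v = (\<Sum>i<k. w i)))"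

text \<open>n (a linear map whose restriction to the G-submodule W is an element of GL(W))
  normalizes \<rho>(G), where \<rho>(g) is the restriction of g to W:
  n \<rho>(G) = \<rho>(G) n as sets of maps on W, i.e. n \<rho>(G) n^(-1) = \<rho>(G).\<close>
definition normalizes_on :: "'v set \<Rightarrow> ('v \<Rightarrow> 'v) set \<Rightarrow> ('v \<Rightarrow> 'v) \<Rightarrow> bool" where
  "normalizes_on W G n \<longleftrightarrow>
     (\<lambda>g. restrict (n \<circ> g) W) ` G = (\<lambda>g. restrict (g \<circ> n) W) ` G"

definition GL_on :: "'v::euclidean_space set \<Rightarrow> ('v \<Rightarrow> 'v) \<Rightarrow> bool" where
  "GL_on W n \<longleftrightarrow> linear n \<and> bij_betw n W W"

definition finite_order_on :: "'v set \<Rightarrow> ('v \<Rightarrow> 'v) \<Rightarrow> bool" where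
  "finite_order_on W n \<longleftrightarrow> (\<exists>k>0. \<forall>x\<in>W. (n ^^ k) x = x)"

definition E1_triple :: "('v::euclidean_space \<Rightarrow> 'v) set \<Rightarrow> 'v set \<Rightarrow> ('v \<Rightarrow> 'v) \<Rightarrow> bool" where
  "E1_triple G W n \<longleftrightarrow> (\<exists>g\<in>G. \<exists>x\<in>W. x \<noteq> 0 \<and> g (n x) = x)"

definition E1_pair :: "('v::euclidean_space \<Rightarrow> 'v) set \<Rightarrow> 'v set \<Rightarrow> bool" where
  "E1_pair G W \<longleftrightarrow> (\<forall>n. GL_on W n \<and> finite_order_on W n \<and> normalizes_on W G n
     \<longrightarrow> E1_triple G W n)"

end

theory Submission
  imports Defs "Jordan_Normal_Form.Char_Poly"
begin

lemma odd_poly_root: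
  fixes p :: "real poly" assumes "odd (degree p)" shows "\<exists>x. poly p x = 0"
proof -
  have p0: "p \<noteq> 0" using assms by auto
  define q where "q = (if lead_coeff p > 0 then p else -p)"
  have lq: "lead_coeff q > 0" using p0 unfolding q_def
    by (auto simp: lead_coeff_minus)
  have dq: "degree q = degree p" by (simp add: q_def)
  have rq: "poly q x = 0 \<Longrightarrow> poly p x = 0" for x by (auto simp: q_def split: if_splits)
  obtain a where a: "\<forall>x\<ge>a. poly q x \<ge> lead_coeff q" using poly_pinfty_gt_lc[OF lq] by blast
  define r where "r = - pcompose q [:0,-1:]"
  have "lead_coeff (pcompose q [:0,-1:]) = lead_coeff q * (-1) ^ degree q"
    by (subst lead_coeff_comp) auto
  also have "\<dots> = - lead_coeff q" using assms dq by simp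
  finally have lr: "lead_coeff r > 0" using lq by (simp add: r_def lead_coeff_minus)
  obtain b where b: "\<forall>x\<ge>b. poly r x \<ge> lead_coeff r" using poly_pinfty_gt_lc[OF lr] by blast
  define c where "c = \<bar>a\<bar> + \<bar>b\<bar> + 1"
  have "poly q c > 0" using a lq unfolding c_def by (smt (verit))
  moreover have "poly r c > 0" using b lr unfolding c_def by (smt (verit))
  hence "poly q (-c) < 0" by (simp add: r_def poly_pcompose)
  moreover have "-c < c" by (simp add: c_def)
  ultimately obtain x where "poly q x = 0" using poly_IVT_pos by blast
  thus ?thesis using rq by blast
qed

lemma inner_bs:
  fixes bs :: "'v::euclidean_space list"
  assumes "set bs = Basis" "distinct bs" "i < length bs"
  shows "inner (\<Sum>j<length bs. c j *\<^sub>R bs!j) (bs!i) = c i"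
proof -
  have "inner (\<Sum>j<length bs. c j *\<^sub>R bs!j) (bs!i) = (\<Sum>j<length bs. c j * inner (bs!j) (bs!i))"
    by (simp add: inner_sum_left)
  also have "\<dots> = (\<Sum>j<length bs. if j = i then c j else 0)"
  proof (rule sum.cong[OF refl])
    fix j assume "j \<in> {..<length bs}"
    hence "bs!j \<in> Basis" "bs!i \<in> Basis" using assms nth_mem by (auto)
    moreover have "bs!j = bs!i \<longleftrightarrow> j = i" using assms \<open>j \<in> _\<close> nth_eq_iff_index_eq by auto
    ultimately show "c j * inner (bs!j) (bs!i) = (if j = i then c j else 0)"
      by (auto simp: inner_Basis)
  qed
  also have "\<dots> = c i" using assms by simp
  finally show ?thesis .
qed

lemma real_eigen:
  fixes f :: "'v::euclidean_space \<Rightarrow> 'v"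
  assumes lf: "linear f" and odd: "odd DIM('v)"
  shows "\<exists>\<mu> x. x \<noteq> 0 \<and> f x = \<mu> *\<^sub>R x"
proof -
  obtain bs :: "'v list" where bs: "set bs = Basis" "distinct bs" using finite_distinct_list[of Basis] by auto
  define n where "n = length bs"
  have nD: "n = DIM('v)" unfolding n_def using distinct_card[OF bs(2)] bs(1) by simp
  define A where "A = mat n n (\<lambda>(i,j). inner (f (bs!j)) (bs!i))"
  have Ac: "A \<in> carrier_mat n n" by (simp add: A_def)
  have "odd (degree (char_poly A))" using degree_monic_char_poly[OF Ac] nD odd by simp
  then obtain \<mu> where "poly (char_poly A) \<mu> = 0" using odd_poly_root by blast
  hence "eigenvalue A \<mu>" using eigenvalue_root_char_poly[OF Ac] by simp
  then obtain v where v: "v \<in> carrier_vec n" "v \<noteq> 0\<^sub>v n" "A *\<^sub>v v = \<mu> \<cdot>\<^sub>v v"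
    unfolding eigenvalue_def eigenvector_def using Ac by auto
  define x where "x = (\<Sum>j<n. (vec_index v j) *\<^sub>R bs!j)"
  have xi: "i < n \<Longrightarrow> inner x (bs!i) = vec_index v i" for i unfolding x_def n_def using inner_bs[OF bs] by blast
  have "x \<noteq> 0"
  proof
    assume "x = 0"
    hence "v = 0\<^sub>v n" using xi v(1) by (intro eq_vecI) auto
    thus False using v(2) by simp
  qed
  moreover have "f x = \<mu> *\<^sub>R x"
  proof (rule euclidean_eqI)
    fix b :: 'v assume "b \<in> Basis"
    then obtain i where i: "i < n" "b = bs!i" using bs n_def by (metis in_set_conv_nth)
    have "inner (f x) b = (\<Sum>j<n. vec_index v j * inner (f (bs!j)) (bs!i))"
      unfolding x_def using i by (simp add: linear_sum[OF lf] linear_cmul[OF lf] inner_sum_left)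
    also have "\<dots> = vec_index (A *\<^sub>v v) i"
      using i v(1) Ac by (auto simp: A_def scalar_prod_def row_def lessThan_atLeast0 mult.commute intro!: sum.cong)
    also have "\<dots> = \<mu> * vec_index v i" using v i by simp
    also have "\<dots> = inner (\<mu> *\<^sub>R x) b" using xi i by simp
    finally show "inner (f x) b = inner (\<mu> *\<^sub>R x) b" .
  qed
  ultimately show ?thesis by blast
qed

locale hsetting =
  fixes G :: "('v::euclidean_space \<Rightarrow> 'v) set" and S :: "'v set" and k :: nat
    and \<phi> :: "nat \<Rightarrow> 'v \<Rightarrow> 'v"
  assumes odd: "odd DIM('v)"
    and Glin: "\<And>g. g \<in> G \<Longrightarrow> linear g"
    and GS: "\<And>g x. g \<in> G \<Longrightarrow> x \<in> S \<Longrightarrow> g x \<in> S"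
    and subS: "subspace S"
    and Snz: "S \<noteq> {0}"
    and irr: "\<And>U. subspace U \<Longrightarrow> (\<And>g x. g \<in> G \<Longrightarrow> x \<in> U \<Longrightarrow> g x \<in> U) \<Longrightarrow> U \<subseteq> S
               \<Longrightarrow> U = {0} \<or> U = S"
    and philin: "\<And>i. i < k \<Longrightarrow> linear (\<phi> i)"
    and phieq: "\<And>i g x. i < k \<Longrightarrow> g \<in> G \<Longrightarrow> x \<in> S \<Longrightarrow> \<phi> i (g x) = g (\<phi> i x)"
    and rep: "\<And>v. \<exists>!s. (\<forall>i<k. s i \<in> S) \<and> (\<forall>i\<ge>k. s i = 0) \<and> v = (\<Sum>i<k. \<phi> i (s i))"
    and E1S: "E1_pair G S"
begin

definition crd :: "'v \<Rightarrow> nat \<Rightarrow> 'v" where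
  "crd v = (THE s. (\<forall>i<k. s i \<in> S) \<and> (\<forall>i\<ge>k. s i = 0) \<and> v = (\<Sum>i<k. \<phi> i (s i)))"

lemma crd_prop: "(\<forall>i<k. crd v i \<in> S) \<and> (\<forall>i\<ge>k. crd v i = 0) \<and> v = (\<Sum>i<k. \<phi> i (crd v i))"
  unfolding crd_def by (rule theI'[OF rep])

lemma crd_S: "i < k \<Longrightarrow> crd v i \<in> S" using crd_prop by blast

lemma crd_sum: "v = (\<Sum>i<k. \<phi> i (crd v i))" using crd_prop by blast

lemma crd_uniq:
  assumes "\<And>i. i < k \<Longrightarrow> s i \<in> S" "v = (\<Sum>i<k. \<phi> i (s i))" "i < k"
  shows "crd v i = s i"
proof -
  define s' where "s' = (\<lambda>i. if i < k then s i else 0)"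
  have "(\<forall>i<k. s' i \<in> S) \<and> (\<forall>i\<ge>k. s' i = 0) \<and> v = (\<Sum>i<k. \<phi> i (s' i))"
    using assms by (auto simp: s'_def)
  hence "crd v = s'" unfolding crd_def by (rule the1_equality[OF rep])
  thus ?thesis using assms by (simp add: s'_def)
qed

lemma phi0: "i < k \<Longrightarrow> \<phi> i 0 = 0" using philin linear_0 by blast

lemma crd_0: "i < k \<Longrightarrow> crd 0 i = 0"
  by (rule crd_uniq) (auto simp: phi0 subspace_0[OF subS])

lemma crd_zero_iff: "v = 0 \<longleftrightarrow> (\<forall>i<k. crd v i = 0)"
proof
  assume "\<forall>i<k. crd v i = 0"
  hence "v = (\<Sum>i<k. \<phi> i 0)" using crd_sum[of v] by simp
  thus "v = 0" by (simp add: phi0)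
qed (auto simp: crd_0)

lemma crd_add: "i < k \<Longrightarrow> crd (v + w) i = crd v i + crd w i"
proof (rule crd_uniq)
  show "crd v j + crd w j \<in> S" if "j < k" for j using that crd_S subspace_add[OF subS] by blast
  have "v + w = (\<Sum>i<k. \<phi> i (crd v i)) + (\<Sum>i<k. \<phi> i (crd w i))" using crd_sum by metis
  also have "\<dots> = (\<Sum>i<k. \<phi> i (crd v i + crd w i))"
    by (simp add: sum.distrib[symmetric] linear_add[OF philin])
  finally show "v + w = (\<Sum>i<k. \<phi> i (crd v i + crd w i))" .
qed

lemma crd_scale: "i < k \<Longrightarrow> crd (c *\<^sub>R v) i = c *\<^sub>R crd v i"
proof (rule crd_uniq)
  show "c *\<^sub>R crd v j \<in> S" if "j < k" for j using that crd_S subspace_scale[OF subS] by blast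
  have "c *\<^sub>R v = c *\<^sub>R (\<Sum>i<k. \<phi> i (crd v i))" using crd_sum by metis
  also have "\<dots> = (\<Sum>i<k. \<phi> i (c *\<^sub>R crd v i))"
    by (simp add: scaleR_sum_right linear_scale[OF philin])
  finally show "c *\<^sub>R v = (\<Sum>i<k. \<phi> i (c *\<^sub>R crd v i))" .
qed

lemma linear_crd: "i < k \<Longrightarrow> linear (\<lambda>v. crd v i)"
  by (rule linearI) (simp_all add: crd_add crd_scale)

lemma crd_g: assumes "g \<in> G" "i < k" shows "crd (g v) i = g (crd v i)"
proof (rule crd_uniq)
  show "g (crd v j) \<in> S" if "j < k" for j using that crd_S GS assms by blast
  have "g v = g (\<Sum>i<k. \<phi> i (crd v i))" using crd_sum by metis
  also have "\<dots> = (\<Sum>i<k. g (\<phi> i (crd v i)))" by (simp add: linear_sum[OF Glin[OF assms(1)]])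
  also have "\<dots> = (\<Sum>i<k. \<phi> i (g (crd v i)))" using phieq assms crd_S by simp
  finally show "g v = (\<Sum>i<k. \<phi> i (g (crd v i)))" .
qed (rule assms)

lemma crd_phi: assumes "x \<in> S" "j < k" "i < k" shows "crd (\<phi> j x) i = (if i = j then x else 0)"
proof (rule crd_uniq)
  show "(if l = j then x else 0) \<in> S" for l using assms subspace_0[OF subS] by auto
  have "(\<Sum>l<k. \<phi> l (if l = j then x else 0)) = (\<Sum>l<k. if l = j then \<phi> j x else 0)"
    by (rule sum.cong) (auto simp: phi0)
  also have "\<dots> = \<phi> j x" using assms by simp
  finally show "\<phi> j x = (\<Sum>l<k. \<phi> l (if l = j then x else 0))" by simp
qed (rule assms)

lemma phi_inj: assumes "j < k" "x \<in> S" "\<phi> j x = 0" shows "x = 0"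
  using crd_phi[OF assms(2,1,1)] crd_0[OF assms(1)] assms(3) by simp

lemma s0_ex: obtains s0 where "s0 \<in> S" "s0 \<noteq> 0"
  using Snz subspace_0[OF subS] by blast

lemma k_pos: "k > 0"
proof (rule ccontr)
  assume "\<not> k > 0"
  hence k0: "k = 0" by simp
  have "v = 0" for v :: 'v using crd_sum[of v] k0 by simp
  thus False using s0_ex by blast
qed

lemma subspace_sum_S: "(\<And>j. j < k \<Longrightarrow> f j \<in> S) \<Longrightarrow> (\<Sum>j<k. f j) \<in> S"
  by (rule subspace_sum[OF subS]) simp

end

locale nsetting = hsetting G S k \<phi> for G :: "('v::euclidean_space \<Rightarrow> 'v) set" and S k \<phi> +
  fixes n :: "'v::euclidean_space \<Rightarrow> 'v"
  assumes nlin: "linear n" and ninj: "inj n"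
    and tw1: "\<And>g. g \<in> G \<Longrightarrow> \<exists>h\<in>G. n \<circ> g = h \<circ> n"
    and tw2: "\<And>h. h \<in> G \<Longrightarrow> \<exists>g\<in>G. n \<circ> g = h \<circ> n"
    and nfin: "\<exists>N>0. \<forall>x. (n ^^ N) x = x"
begin

definition tw :: "('v \<Rightarrow> 'v) \<Rightarrow> bool" where
  "tw T \<longleftrightarrow> linear T \<and> (\<forall>x\<in>S. T x \<in> S) \<and>
     (\<forall>g\<in>G. \<forall>h\<in>G. n \<circ> g = h \<circ> n \<longrightarrow> (\<forall>x\<in>S. T (g x) = h (T x)))"

lemma tw_bij: assumes "tw M" "x0 \<in> S" "M x0 \<noteq> 0" shows "bij_betw M S S"
proof -
  have lM: "linear M" and MS: "\<And>x. x \<in> S \<Longrightarrow> M x \<in> S"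
    and Mt: "\<And>g h x. g \<in> G \<Longrightarrow> h \<in> G \<Longrightarrow> n \<circ> g = h \<circ> n \<Longrightarrow> x \<in> S \<Longrightarrow> M (g x) = h (M x)"
    using assms(1) unfolding tw_def by auto
  define U0 where "U0 = {x\<in>S. M x = 0}"
  have "subspace U0" unfolding U0_def subspace_def
    using subS linear_0[OF lM] linear_add[OF lM] linear_scale[OF lM]
    by (auto simp: subspace_0 subspace_add subspace_scale)
  moreover have "g x \<in> U0" if gG: "g \<in> G" and xU: "x \<in> U0" for g x
  proof -
    obtain h where h: "h \<in> G" "n \<circ> g = h \<circ> n" using tw1[OF \<open>g \<in> G\<close>] by blast
    have "M (g x) = h (M x)" using Mt[OF gG h] xU U0_def by auto
    also have "\<dots> = 0" using xU U0_def linear_0[OF Glin[OF h(1)]] by auto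
    finally show ?thesis using gG xU GS U0_def by auto
  qed
  moreover have "U0 \<subseteq> S" "U0 \<noteq> S" using assms U0_def by auto
  ultimately have "U0 = {0}" using irr by blast
  hence inj: "inj_on M S" using linear_inj_on_iff_eq_0[OF lM subS] U0_def by auto
  have "subspace (M ` S)" using linear_subspace_image[OF lM subS] .
  moreover have "h y \<in> M ` S" if hG: "h \<in> G" and yM: "y \<in> M ` S" for h y
  proof -
    obtain x where x: "x \<in> S" "y = M x" using yM by blast
    obtain g where g: "g \<in> G" "n \<circ> g = h \<circ> n" using tw2[OF \<open>h \<in> G\<close>] by blast
    have "h y = M (g x)" using Mt[OF g(1) hG g(2) x(1)] x by simp
    thus ?thesis using GS g x by auto
  qed
  moreover have "M ` S \<subseteq> S" "M ` S \<noteq> {0}" using MS assms by auto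
  ultimately have "M ` S = S" using irr by blast
  thus ?thesis using inj bij_betw_def by blast
qed

lemma lin_term: "i < k \<Longrightarrow> linear T \<Longrightarrow> linear (\<lambda>v. \<phi> i (T (crd v i)))"
  using linear_compose[OF linear_compose[OF linear_crd], OF _ _ philin]
  by (simp add: o_def)

lemma schur_tw:
  assumes tT: "tw T" and tM: "tw M" and bM: "bij_betw M S S"
  shows "\<exists>a. \<forall>x\<in>S. T x = a *\<^sub>R M x"
proof -
  have lT: "linear T" and TS: "\<And>x. x \<in> S \<Longrightarrow> T x \<in> S"
    and Tt: "\<And>g h x. g \<in> G \<Longrightarrow> h \<in> G \<Longrightarrow> n \<circ> g = h \<circ> n \<Longrightarrow> x \<in> S \<Longrightarrow> T (g x) = h (T x)"
    using tT unfolding tw_def by auto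
  have lM: "linear M" and MS: "\<And>x. x \<in> S \<Longrightarrow> M x \<in> S"
    and Mt: "\<And>g h x. g \<in> G \<Longrightarrow> h \<in> G \<Longrightarrow> n \<circ> g = h \<circ> n \<Longrightarrow> x \<in> S \<Longrightarrow> M (g x) = h (M x)"
    using tM unfolding tw_def by auto
  define L where "L v = (\<Sum>i<k. \<phi> i (T (crd v i)))" for v
  define K where "K v = (\<Sum>i<k. \<phi> i (M (crd v i)))" for v
  have lL: "linear L" unfolding L_def by (rule linear_compose_sum) (use lin_term lT in auto)
  have lK: "linear K" unfolding K_def by (rule linear_compose_sum) (use lin_term lM in auto)
  have cL: "crd (L v) i = T (crd v i)" if "i < k" for v i
    unfolding L_def by (rule crd_uniq) (use TS crd_S that in auto)
  have cK: "crd (K v) i = M (crd v i)" if "i < k" for v i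
    unfolding K_def by (rule crd_uniq) (use MS crd_S that in auto)
  have injM: "inj_on M S" using bM bij_betw_def by blast
  have "inj K"
  proof (subst linear_inj_iff_eq_0[OF lK], intro allI impI)
    fix v assume "K v = 0"
    hence "M (crd v i) = M 0" if "i < k" for i using cK[OF that, of v] crd_0[OF that] linear_0[OF lM] by simp
    hence "crd v i = 0" if "i < k" for i using injM crd_S that subspace_0[OF subS] inj_onD by metis
    thus "v = 0" using crd_zero_iff by blast
  qed
  then obtain K' where K': "linear K'" "\<And>x. K' (K x) = x" "\<And>x. K (K' x) = x"
    using linear_injective_isomorphism[OF lK] by blast
  obtain \<mu> y where y: "y \<noteq> 0" "(K' \<circ> L) y = \<mu> *\<^sub>R y"
    using real_eigen[OF linear_compose[OF lL K'(1)] odd] by blast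
  have "L y = K (K' (L y))" using K' by simp
  also have "\<dots> = K (\<mu> *\<^sub>R y)" using y by simp
  finally have Ly: "L y = K (\<mu> *\<^sub>R y)" .
  have TM: "T (crd y i) = \<mu> *\<^sub>R M (crd y i)" if "i < k" for i
    using cL[OF that, of y] cK[OF that, of "\<mu> *\<^sub>R y"] Ly crd_scale[OF that] linear_scale[OF lM] by simp
  obtain i where i: "i < k" "crd y i \<noteq> 0" using y(1) crd_zero_iff by blast
  define U where "U = {x\<in>S. T x = \<mu> *\<^sub>R M x}"
  have "subspace U" unfolding U_def subspace_def
    using subS linear_0[OF lM] linear_add[OF lM] linear_scale[OF lM] linear_0[OF lT] linear_add[OF lT] linear_scale[OF lT]
    by (auto simp: subspace_0 subspace_add subspace_scale scaleR_add_right)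
  moreover have "g x \<in> U" if gG: "g \<in> G" and xU: "x \<in> U" for g x
  proof -
    obtain h where h: "h \<in> G" "n \<circ> g = h \<circ> n" using tw1[OF \<open>g \<in> G\<close>] by blast
    have "T (g x) = h (T x)" using Tt[OF gG h] xU U_def by auto
    also have "\<dots> = \<mu> *\<^sub>R h (M x)" using xU U_def linear_scale[OF Glin[OF h(1)]] by auto
    also have "\<dots> = \<mu> *\<^sub>R M (g x)" using Mt[OF gG h] xU U_def by auto
    finally show ?thesis using gG xU GS U_def by auto
  qed
  moreover have "U \<subseteq> S" "U \<noteq> {0}" using U_def TM i crd_S by auto
  ultimately have "U = S" using irr by blast
  thus ?thesis unfolding U_def by blast
qed


lemma main: "E1_triple G UNIV n"
proof -
  define T where "T i j = (\<lambda>x. crd (n (\<phi> j x)) i)" for i j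
  have twT: "tw (T i j)" if ij: "i < k" "j < k" for i j
    unfolding tw_def
  proof (intro conjI ballI impI)
    show "linear (T i j)" unfolding T_def
      using linear_compose[OF linear_compose[OF philin[OF ij(2)] nlin] linear_crd[OF ij(1)]]
      by (simp add: o_def)
    show "T i j x \<in> S" if "x \<in> S" for x unfolding T_def using crd_S ij by blast
    fix g h x assume g: "g \<in> G" and h: "h \<in> G" and ngh: "n \<circ> g = h \<circ> n" and x: "x \<in> S"
    have "n (\<phi> j (g x)) = n (g (\<phi> j x))" using phieq ij g x by simp
    also have "\<dots> = h (n (\<phi> j x))" using fun_cong[OF ngh] by simp
    finally show "T i j (g x) = h (T i j x)" unfolding T_def using crd_g[OF h ij(1)] by simp
  qed
  obtain s0 where s0: "s0 \<in> S" "s0 \<noteq> 0" using s0_ex by blast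
  have "\<phi> 0 s0 \<noteq> 0" using phi_inj[OF k_pos s0(1)] s0(2) by blast
  hence "n (\<phi> 0 s0) \<noteq> 0" using ninj linear_inj_iff_eq_0[OF nlin] by blast
  then obtain i0 where i0: "i0 < k" "T i0 0 s0 \<noteq> 0" unfolding T_def using crd_zero_iff by blast
  define M where "M = T i0 0"
  have twM: "tw M" unfolding M_def using twT i0(1) k_pos by blast
  have bijM: "bij_betw M S S" using tw_bij[OF twM s0(1)] i0(2) M_def by blast
  have lM: "linear M" and MS: "\<And>x. x \<in> S \<Longrightarrow> M x \<in> S"
    and Mt: "\<And>g h x. g \<in> G \<Longrightarrow> h \<in> G \<Longrightarrow> n \<circ> g = h \<circ> n \<Longrightarrow> x \<in> S \<Longrightarrow> M (g x) = h (M x)"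
    using twM unfolding tw_def by auto
  have "\<forall>i j. \<exists>a. i < k \<longrightarrow> j < k \<longrightarrow> (\<forall>x\<in>S. T i j x = a *\<^sub>R M x)"
    using schur_tw[OF twT twM bijM] by blast
  then obtain a where a: "\<And>i j x. i < k \<Longrightarrow> j < k \<Longrightarrow> x \<in> S \<Longrightarrow> T i j x = a i j *\<^sub>R M x"
    by metis
  have nphi: "n (\<phi> j x) = (\<Sum>i<k. a i j *\<^sub>R \<phi> i (M x))" if "j < k" "x \<in> S" for j x
  proof -
    have "n (\<phi> j x) = (\<Sum>i<k. \<phi> i (T i j x))" unfolding T_def by (rule crd_sum)
    also have "\<dots> = (\<Sum>i<k. a i j *\<^sub>R \<phi> i (M x))"
      by (rule sum.cong) (use a that linear_scale[OF philin] in auto)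
    finally show ?thesis .
  qed
  define B where "B v = (\<Sum>i<k. \<phi> i (\<Sum>j<k. a i j *\<^sub>R crd v j))" for v
  have lB: "linear B" unfolding B_def
  proof (rule linear_compose_sum, intro ballI)
    fix i assume i: "i \<in> {..<k}"
    have "linear (\<lambda>v. \<Sum>j<k. a i j *\<^sub>R crd v j)"
      by (rule linear_compose_sum) (auto intro!: linear_compose_scale_right linear_crd)
    from linear_compose[OF this philin] i show "linear (\<lambda>v. \<phi> i (\<Sum>j<k. a i j *\<^sub>R crd v j))"
      by (simp add: o_def)
  qed
  obtain \<mu> y where y: "y \<noteq> 0" "B y = \<mu> *\<^sub>R y" using real_eigen[OF lB odd] by blast
  have Bc: "(\<Sum>j<k. a i j *\<^sub>R crd y j) = \<mu> *\<^sub>R crd y i" if i: "i < k" for i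
  proof -
    have "crd (B y) i = (\<Sum>j<k. a i j *\<^sub>R crd y j)" unfolding B_def
      by (rule crd_uniq) (auto intro!: subspace_sum_S subspace_scale[OF subS] crd_S i)
    thus ?thesis using y(2) crd_scale[OF i] by simp
  qed
  obtain j0 where j0: "j0 < k" "crd y j0 \<noteq> 0" using y(1) crd_zero_iff by blast
  define u where "u j = inner (crd y j) (crd y j0)" for j
  have u0: "u j0 \<noteq> 0" using j0 u_def by simp
  have Au: "(\<Sum>j<k. a i j * u j) = \<mu> * u i" if "i < k" for i
  proof -
    have "(\<Sum>j<k. a i j * u j) = inner (\<Sum>j<k. a i j *\<^sub>R crd y j) (crd y j0)"
      by (simp add: u_def inner_sum_left)
    also have "\<dots> = \<mu> * u i" using Bc[OF that] by (simp add: u_def)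
    finally show ?thesis .
  qed
  define Z where "Z x = (\<Sum>j<k. u j *\<^sub>R \<phi> j x)" for x
  have lZ: "linear Z" unfolding Z_def
    by (rule linear_compose_sum) (auto intro!: linear_compose_scale_right philin)
  have Zn: "n (Z x) = Z (\<mu> *\<^sub>R M x)" if x: "x \<in> S" for x
  proof -
    have "n (Z x) = (\<Sum>j<k. u j *\<^sub>R n (\<phi> j x))"
      unfolding Z_def by (simp add: linear_sum[OF nlin] linear_scale[OF nlin])
    also have "\<dots> = (\<Sum>j<k. u j *\<^sub>R (\<Sum>i<k. a i j *\<^sub>R \<phi> i (M x)))"
      by (rule sum.cong) (use nphi x in auto)
    also have "\<dots> = (\<Sum>j<k. \<Sum>i<k. (a i j * u j) *\<^sub>R \<phi> i (M x))"
      by (simp add: scaleR_sum_right mult.commute)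
    also have "\<dots> = (\<Sum>i<k. \<Sum>j<k. (a i j * u j) *\<^sub>R \<phi> i (M x))"
      by (rule sum.swap)
    also have "\<dots> = (\<Sum>i<k. (\<Sum>j<k. a i j * u j) *\<^sub>R \<phi> i (M x))"
      by (simp add: scaleR_sum_left)
    also have "\<dots> = (\<Sum>i<k. u i *\<^sub>R \<phi> i (\<mu> *\<^sub>R M x))"
      by (rule sum.cong) (use Au linear_scale[OF philin] in auto)
    finally show ?thesis unfolding Z_def .
  qed
  have Zinj: "x = 0" if x: "x \<in> S" "Z x = 0" for x
  proof -
    have "Z x = (\<Sum>j<k. \<phi> j (u j *\<^sub>R x))" unfolding Z_def
      by (rule sum.cong) (use linear_scale[OF philin] in auto)
    hence "crd (Z x) j0 = u j0 *\<^sub>R x"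
      by (intro crd_uniq j0(1)) (auto intro: subspace_scale[OF subS] x)
    hence "u j0 *\<^sub>R x = 0" using x(2) crd_0[OF j0(1)] by simp
    thus ?thesis using u0 by simp
  qed
  have Zg: "g (Z x) = Z (g x)" if g: "g \<in> G" and x: "x \<in> S" for g x
  proof -
    have "g (Z x) = (\<Sum>j<k. u j *\<^sub>R g (\<phi> j x))"
      unfolding Z_def by (simp add: linear_sum[OF Glin[OF g]] linear_scale[OF Glin[OF g]])
    also have "\<dots> = Z (g x)" unfolding Z_def by (rule sum.cong) (use phieq g x in auto)
    finally show ?thesis .
  qed
  have M0: "M s0 \<noteq> 0"
  proof
    assume "M s0 = 0"
    hence "M s0 = M 0" using linear_0[OF lM] by simp
    thus False using bijM s0 subspace_0[OF subS] unfolding bij_betw_def inj_on_def by blast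
  qed
  have mu0: "\<mu> \<noteq> 0"
  proof
    assume "\<mu> = 0"
    hence "n (Z s0) = 0" using Zn[OF s0(1)] linear_0[OF lZ] by simp
    hence "Z s0 = 0" using ninj linear_inj_iff_eq_0[OF nlin] by blast
    thus False using Zinj s0 by blast
  qed
  define M2 where "M2 x = \<mu> *\<^sub>R M x" for x
  have lM2: "linear M2" unfolding M2_def by (intro linear_compose_scale_right lM)
  have M2S: "M2 x \<in> S" if "x \<in> S" for x using MS[OF that] subspace_scale[OF subS] M2_def by simp
  have M2t: "M2 (g x) = h (M2 x)" if "g \<in> G" "h \<in> G" "n \<circ> g = h \<circ> n" "x \<in> S" for g h x
    using Mt[OF that] linear_scale[OF Glin[OF that(2)]] M2_def by simp
  have twM2: "tw M2" unfolding tw_def using lM2 M2S M2t by blast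
  have bijM2: "bij_betw M2 S S" using tw_bij[OF twM2 s0(1)] M0 mu0 M2_def by simp
  have iter: "(n ^^ p) (Z x) = Z ((M2 ^^ p) x) \<and> (M2 ^^ p) x \<in> S" if "x \<in> S" for p x
  proof (induction p)
    case (Suc p)
    thus ?case using Zn M2S M2_def by simp
  qed (simp add: that)
  obtain N where N: "N > 0" "\<And>x. (n ^^ N) x = x" using nfin by blast
  have finM2: "(M2 ^^ N) x = x" if x: "x \<in> S" for x
  proof -
    have "Z x = Z ((M2 ^^ N) x)" using iter[OF x, of N] N(2) by simp
    hence "Z (x - (M2 ^^ N) x) = 0" using linear_diff[OF lZ] by simp
    moreover have "x - (M2 ^^ N) x \<in> S" using iter[OF x, of N] x subspace_diff[OF subS] by blast
    ultimately show ?thesis using Zinj by fastforce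
  qed
  have normM2: "normalizes_on S G M2" unfolding normalizes_on_def
  proof (intro equalityI subsetI)
    fix f assume "f \<in> (\<lambda>g. restrict (M2 \<circ> g) S) ` G"
    then obtain g where g: "g \<in> G" "f = restrict (M2 \<circ> g) S" by blast
    obtain h where h: "h \<in> G" "n \<circ> g = h \<circ> n" using tw1[OF g(1)] by blast
    have "f = restrict (h \<circ> M2) S" using g M2t[OF g(1) h] by (auto simp: restrict_def)
    thus "f \<in> (\<lambda>g. restrict (g \<circ> M2) S) ` G" using h by blast
  next
    fix f assume "f \<in> (\<lambda>g. restrict (g \<circ> M2) S) ` G"
    then obtain h where h: "h \<in> G" "f = restrict (h \<circ> M2) S" by blast
    obtain g where g: "g \<in> G" "n \<circ> g = h \<circ> n" using tw2[OF h(1)] by blast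
    have "f = restrict (M2 \<circ> g) S" using h M2t[OF g(1) h(1) g(2)] by (auto simp: restrict_def)
    thus "f \<in> (\<lambda>g. restrict (M2 \<circ> g) S) ` G" using g by blast
  qed
  have "E1_triple G S M2"
    using E1S unfolding E1_pair_def GL_on_def finite_order_on_def
    using lM2 bijM2 finM2 N(1) normM2 by blast
  then obtain g x where gx: "g \<in> G" "x \<in> S" "x \<noteq> 0" "g (M2 x) = x"
    unfolding E1_triple_def by blast
  have "Z x \<noteq> 0" using Zinj gx by blast
  moreover have "g (n (Z x)) = Z x"
    using Zn[OF gx(2)] Zg[OF gx(1) M2S[OF gx(2)]] gx(4) M2_def by simp
  ultimately show ?thesis unfolding E1_triple_def using gx(1) by blast
qed

end

theorem lemma2:
  fixes G :: "('v::euclidean_space \<Rightarrow> 'v) set" and S :: "'v set"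
  assumes "odd DIM('v)"
    and "finite_linear_group G"
    and "irreducible_submodule G S"
    and "homogeneous G S"
    and "E1_pair G S"
  shows "E1_pair G (UNIV :: 'v set)"
proof -
  have Glin: "\<And>g. g \<in> G \<Longrightarrow> linear g" using assms(2) unfolding finite_linear_group_def by blast
  have irrS: "G_submodule G S" "S \<noteq> {0}"
    "\<And>U. G_submodule G U \<Longrightarrow> U \<subseteq> S \<Longrightarrow> U = {0} \<or> U = S"
    using assms(3) unfolding irreducible_submodule_def by blast+
  obtain k :: nat and W :: "nat \<Rightarrow> 'v set" where
    kW: "\<forall>i<k. G_submodule G (W i) \<and> G_iso_submodules G S (W i)"
    and dec: "\<forall>v. \<exists>!w. (\<forall>i<k. w i \<in> W i) \<and> (\<forall>i\<ge>k. w i = 0) \<and> v = (\<Sum>i<k. w i)"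
    using assms(4) unfolding homogeneous_def by blast
  have "\<forall>i. \<exists>f. i < k \<longrightarrow> linear f \<and> bij_betw f S (W i) \<and> (\<forall>g\<in>G. \<forall>x\<in>S. f (g x) = g (f x))"
    using kW unfolding G_iso_submodules_def by blast
  then obtain \<phi> where \<phi>: "\<And>i. i < k \<Longrightarrow> linear (\<phi> i) \<and> bij_betw (\<phi> i) S (W i) \<and>
      (\<forall>g\<in>G. \<forall>x\<in>S. \<phi> i (g x) = g (\<phi> i x))"
    by metis
  have philin: "linear (\<phi> i)" if "i < k" for i using \<phi>[OF that] by blast
  have phiinj: "inj_on (\<phi> i) S" if "i < k" for i using \<phi>[OF that] by (simp add: bij_betw_def)
  have phiimg: "\<phi> i ` S = W i" if "i < k" for i using \<phi>[OF that] by (simp add: bij_betw_def)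
  have phieq: "\<forall>g\<in>G. \<forall>x\<in>S. \<phi> i (g x) = g (\<phi> i x)" if "i < k" for i using \<phi>[OF that] by blast
  have rep: "\<exists>!s. (\<forall>i<k. s i \<in> S) \<and> (\<forall>i\<ge>k. s i = 0) \<and> v = (\<Sum>i<k. \<phi> i (s i))" for v
  proof -
    define w where "w = (THE w. (\<forall>i<k. w i \<in> W i) \<and> (\<forall>i\<ge>k. w i = 0) \<and> v = (\<Sum>i<k. w i))"
    have wP: "(\<forall>i<k. w i \<in> W i) \<and> (\<forall>i\<ge>k. w i = 0) \<and> v = (\<Sum>i<k. w i)"
      unfolding w_def by (rule theI'[OF dec[rule_format, of v]])
    have w1: "\<forall>i<k. w i \<in> W i" using wP by (rule conjunct1)
    have w3: "v = (\<Sum>i<k. w i)" using wP by (rule conjunct2[OF conjunct2])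
    define s where "s i = (if i < k then inv_into S (\<phi> i) (w i) else 0)" for i
    have wim: "w i \<in> \<phi> i ` S" if "i < k" for i using w1 that phiimg[OF that] by simp
    have sS: "s i \<in> S" if "i < k" for i
      unfolding s_def using that inv_into_into[OF wim[OF that]] by simp
    have ps: "\<phi> i (s i) = w i" if "i < k" for i
      unfolding s_def using that f_inv_into_f[OF wim[OF that]] by simp
    have "(\<Sum>i<k. \<phi> i (s i)) = (\<Sum>i<k. w i)" by (rule sum.cong) (simp_all add: ps)
    hence ex: "(\<forall>i<k. s i \<in> S) \<and> (\<forall>i\<ge>k. s i = 0) \<and> v = (\<Sum>i<k. \<phi> i (s i))"
      using sS w3 by (simp add: s_def)
    have uniq: "t = s" if t: "(\<forall>i<k. t i \<in> S) \<and> (\<forall>i\<ge>k. t i = 0) \<and> v = (\<Sum>i<k. \<phi> i (t i))" for t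
    proof -
      have t1: "\<forall>i<k. t i \<in> S" using t by (rule conjunct1)
      have t2: "\<forall>i\<ge>k. t i = 0" using t by (rule conjunct1[OF conjunct2])
      have t3: "v = (\<Sum>i<k. \<phi> i (t i))" using t by (rule conjunct2[OF conjunct2])
      define w' where "w' i = (if i < k then \<phi> i (t i) else 0)" for i
      have a1: "\<forall>i<k. w' i \<in> W i"
      proof (intro allI impI)
        fix i assume i: "i < k"
        have "\<phi> i (t i) \<in> \<phi> i ` S" using t1 i by blast
        thus "w' i \<in> W i" using phiimg[OF i] i unfolding w'_def by simp
      qed
      have a2: "\<forall>i\<ge>k. w' i = 0" unfolding w'_def by simp
      have "(\<Sum>i<k. w' i) = (\<Sum>i<k. \<phi> i (t i))" by (rule sum.cong) (simp_all add: w'_def)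
      hence a3: "v = (\<Sum>i<k. w' i)" using t3 by simp
      have "w = w'" unfolding w_def
        by (rule the1_equality[OF dec[rule_format, of v]]) (intro conjI a1 a2 a3)
      show "t = s"
      proof
        fix i show "t i = s i"
        proof (cases "i < k")
          case True
          have "\<phi> i (t i) = \<phi> i (s i)" using ps[OF True] \<open>w = w'\<close> True unfolding w'_def by simp
          thus ?thesis using inj_onD[OF phiinj[OF True]] t1 sS[OF True] True by blast
        next
          case False
          thus ?thesis using t2 unfolding s_def by simp
        qed
      qed
    qed
    show ?thesis using ex uniq by (rule ex1I)
  qed
  have GS: "\<And>g x. g \<in> G \<Longrightarrow> x \<in> S \<Longrightarrow> g x \<in> S" and subS: "subspace S"
    using irrS(1) unfolding G_submodule_def by blast+
  have irrU: "\<And>U. subspace U \<Longrightarrow> (\<And>g x. g \<in> G \<Longrightarrow> x \<in> U \<Longrightarrow> g x \<in> U) \<Longrightarrow> U \<subseteq> S \<Longrightarrow> U = {0} \<or> U = S"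
    using irrS(3) unfolding G_submodule_def by blast
  have phieq': "\<And>i g x. i < k \<Longrightarrow> g \<in> G \<Longrightarrow> x \<in> S \<Longrightarrow> \<phi> i (g x) = g (\<phi> i x)"
    using phieq by blast
  have hs: "hsetting G S k \<phi>"
    apply (rule hsetting.intro)
    subgoal by (rule assms(1))
    subgoal by (rule Glin)
    subgoal by (rule GS)
    subgoal by (rule subS)
    subgoal by (rule irrS(2))
    subgoal by (rule irrU)
    subgoal by (rule philin)
    subgoal by (rule phieq')
    subgoal by (rule rep)
    subgoal by (rule assms(5))
    done
  interpret hsetting G S k \<phi> by (rule hs)
  have rU: "restrict f UNIV = f" for f :: "'v \<Rightarrow> 'v" by (rule ext) (simp add: restrict_def)
  show ?thesis unfolding E1_pair_def
  proof (intro allI impI)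
    fix n :: "'v \<Rightarrow> 'v"
    assume "GL_on UNIV n \<and> finite_order_on UNIV n \<and> normalizes_on UNIV G n"
    hence n0: "linear n" "bij_betw n UNIV UNIV" "\<exists>N>0. \<forall>x\<in>UNIV. (n ^^ N) x = x"
      "(\<lambda>g. restrict (n \<circ> g) UNIV) ` G = (\<lambda>g. restrict (g \<circ> n) UNIV) ` G"
      unfolding GL_on_def finite_order_on_def normalizes_on_def by blast+
    have n: "linear n" "inj n" "\<exists>N>0. \<forall>x. (n ^^ N) x = x"
      "(\<lambda>g. n \<circ> g) ` G = (\<lambda>g. g \<circ> n) ` G"
      using n0 unfolding rU bij_betw_def by simp_all
    have t1: "\<exists>h\<in>G. n \<circ> g = h \<circ> n" if "g \<in> G" for g
    proof -
      have "n \<circ> g \<in> (\<lambda>g. g \<circ> n) ` G" using n(4) that by blast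
      thus ?thesis by blast
    qed
    have t2: "\<exists>g\<in>G. n \<circ> g = h \<circ> n" if "h \<in> G" for h
    proof -
      have "h \<circ> n \<in> (\<lambda>g. n \<circ> g) ` G" using n(4) that by blast
      thus ?thesis by auto
    qed
    have ns: "nsetting G S k \<phi> n"
      apply (rule nsetting.intro[OF hs])
      apply (rule nsetting_axioms.intro)
      subgoal by (rule n(1))
      subgoal by (rule n(2))
      subgoal by (rule t1)
      subgoal by (rule t2)
      subgoal by (rule n(3))
      done
    interpret nsetting G S k \<phi> n by (rule ns)
    show "E1_triple G UNIV n" by (rule main)
  qed
qed

end
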